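(* Let $N\in\mathbb{N}$ and $\Lambda\subseteq P_N$. (i) If $\{(W_n,A_n,\Theta_n)\}_{n\in\mathbb{N}}$ is a sequence in $\mathbb{D}_N$ converging to $(w,a,\theta)\in\mathcal{D}_N$, then $\lim_{n\to\infty}\pi_\Lambda(W_n,A_n,\Theta_n)=\pi_\Lambda(w,a,\theta)$. (ii) The set $\mathcal{D}_N$ is path-connected and contains $\mathcal{T}_N^+$. Furthermore, if $N\ge1$, its interior is $\mathcal{D}_N^\circ=\{(w,a,\theta)\in\mathcal{D}_N:a^{-1}[0]=\emptyset\}$, and it decomposes into $2^N$ simply-connected components $\mathcal{D}^\circ_{N,\Lambda}:=\{(w,a,\theta)\in\mathcal{D}_N^\circ:a^{-1}[-\mathcal{C}]=\Lambda\}$, $\Lambda\subseteq P_N$.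
   Context: $\mathbb{N}=\{0,1,\dots\}$, $P_N=\{1,\dots,N\}$ ($P_0=\emptyset$); vectors are functions on $P_N$, $v^{-1}[S]=\{\ell:v_\ell\in S\}$, $\mathrm{Tr}(v,\Lambda):=\sum_{\ell\in\Lambda}v_\ell$, $N(\Lambda):=N-|\Lambda|$. $\mathcal{C}:=\{z:\mathrm{Re}(z)>0\text{ or }z\in i\mathbb{R}_{>0}\}$, $\mathcal{C}^\circ$ the open right half-plane. For $N\ge1$: $\mathbb{D}_N:=\{(w,a,\theta)\in\mathbb{C}\times\mathbb{C}^N\times\mathbb{R}^N:a^{-1}[0]\subseteq\theta^{-1}[\mathbb{R}\smallsetminus\mathbb{Z}]\}$, $\pi(w,a,\theta):=w-\mathrm{Tr}(a,a^{-1}[-\mathcal{C}])$, $\mathcal{D}_N:=\{(w,a,\theta)\in\mathbb{D}_N:\pi(w,a,\theta)\in\mathcal{C}^\circ,\ a_\ell\notin i\mathbb{R}\smallsetminus\{0\}\ \forall\ell\}$, $\mathcal{T}_N^+:=\{(w,a,\theta):\mathrm{Re}(w)>0,\mathrm{Re}(a_\ell)>0\ \forall\ell\}$. For $N=0$: $\mathbb{D}_0=\mathbb{C}$, $\mathcal{D}_0=\mathcal{T}_0^+=\{w:\mathrm{Re}(w)>0\}$. Projections $\pi_\Lambda:\mathbb{D}_N\to\mathbb{D}_{N(\Lambda)}$: identity if $\Lambda=\emptyset$; $\pi$ if $\Lambda=P_N\ne\emptyset$; otherwise $\pi_\Lambda(w,a,\theta):=(w-\mathrm{Tr}(a,\Lambda\cap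 a^{-1}[-\mathcal{C}]),a\circ\varphi,\theta\circ\varphi)$ with $\varphi$ the strictly increasing bijection $P_{N(\Lambda)}\to P_N\smallsetminus\Lambda$. *)

theory Defs
  imports "HOL-Analysis.Analysis"
begin

(* Points (w,a,theta) of C x C^N x R^N are represented as elements of
   complex \<times> (nat \<Rightarrow> complex) \<times> (nat \<Rightarrow> real), where the vectors a, theta
   are indexed by P_N = {1..N} and are 0 at all indices outside P_N.
   The ambient space C x C^N x R^N is the set ambient N below (with the
   product topology, which coincides with the Euclidean topology there). *)

type_synonym pt = "complex \<times> (nat \<Rightarrow> complex) \<times> (nat \<Rightarrow> real)"

definition PN :: "nat \<Rightarrow> nat set" where
  "PN N = {1..N}"

definition ambient :: "nat \<Rightarrow> pt set" where
  "ambient N = {(w,a,\<theta>). \<forall>l. l \<notin> PN N \<longrightarrow> a l = 0 \<and> \<theta> l = 0}"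

definition Trc :: "(nat \<Rightarrow> complex) \<Rightarrow> nat set \<Rightarrow> complex" where
  "Trc v \<Lambda> = (\<Sum>l\<in>\<Lambda>. v l)"

definition Nrem :: "nat \<Rightarrow> nat set \<Rightarrow> nat" where
  "Nrem N \<Lambda> = N - card \<Lambda>"

definition Cset :: "complex set" where
  "Cset = {z. Re z > 0 \<or> (Re z = 0 \<and> Im z > 0)}"

definition Cint :: "complex set" where
  "Cint = {z. Re z > 0}"

definition negC_idx :: "nat \<Rightarrow> (nat \<Rightarrow> complex) \<Rightarrow> nat set" where
  "negC_idx N a = {l \<in> PN N. a l \<in> uminus ` Cset}"

definition DD :: "nat \<Rightarrow> pt set" where
  "DD N = {(w,a,\<theta>) \<in> ambient N. \<forall>l \<in> PN N. a l = 0 \<longrightarrow> \<theta> l \<notin> \<int>}"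

definition piN :: "nat \<Rightarrow> pt \<Rightarrow> complex" where
  "piN N x = (case x of (w,a,\<theta>) \<Rightarrow> w - Trc a (negC_idx N a))"

definition Dset :: "nat \<Rightarrow> pt set" where
  "Dset N = {(w,a,\<theta>) \<in> DD N. piN N (w,a,\<theta>) \<in> Cint \<and>
        (\<forall>l \<in> PN N. \<not> (Re (a l) = 0 \<and> a l \<noteq> 0))}"

definition Tplus :: "nat \<Rightarrow> pt set" where
  "Tplus N = {(w,a,\<theta>) \<in> ambient N. Re w > 0 \<and> (\<forall>l \<in> PN N. Re (a l) > 0)}"

(* the strictly increasing bijection P_{N(\<Lambda>)} \<rightarrow> P_N - \<Lambda> *)
definition phi :: "nat \<Rightarrow> nat set \<Rightarrow> nat \<Rightarrow> nat" where
  "phi N \<Lambda> j = sorted_list_of_set (PN N - \<Lambda>) ! (j - 1)"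

definition piL :: "nat \<Rightarrow> nat set \<Rightarrow> pt \<Rightarrow> pt" where
  "piL N \<Lambda> x = (case x of (w,a,\<theta>) \<Rightarrow>
     if \<Lambda> = {} then (w,a,\<theta>)
     else if \<Lambda> = PN N then (piN N (w,a,\<theta>), (\<lambda>_. 0), (\<lambda>_. 0))
     else (w - Trc a (\<Lambda> \<inter> negC_idx N a),
           (\<lambda>j. if j \<in> PN (Nrem N \<Lambda>) then a (phi N \<Lambda> j) else 0),
           (\<lambda>j. if j \<in> PN (Nrem N \<Lambda>) then \<theta> (phi N \<Lambda> j) else 0)))"

definition Dint :: "nat \<Rightarrow> pt set" where
  "Dint N = (subtopology euclidean (ambient N)) interior_of (Dset N)"

definition DintL :: "nat \<Rightarrow> nat set \<Rightarrow> pt set" where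
  "DintL N \<Lambda> = {(w,a,\<theta>) \<in> Dint N. negC_idx N a = \<Lambda>}"

end

theory Submission
  imports Defs
begin

definition cmb :: "real \<Rightarrow> pt \<Rightarrow> pt \<Rightarrow> pt" where
 "cmb t x y = ((1-t) *\<^sub>R fst x + t *\<^sub>R fst y,
    \<lambda>l. (1-t) *\<^sub>R fst (snd x) l + t *\<^sub>R fst (snd y) l,
    \<lambda>l. (1-t) * snd (snd x) l + t * snd (snd y) l)"

lemma cont_coord_a:
  assumes "continuous_on S (f :: 'a::topological_space \<Rightarrow> pt)"
  shows "continuous_on S (\<lambda>z. fst (snd (f z)) l)"
proof -
  have "continuous_on S (\<lambda>z. fst (snd (f z)))"
    by (intro continuous_intros assms)
  then show ?thesis
    by (rule continuous_on_compose2[OF continuous_on_product_coordinates]) auto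
qed

lemma cont_coord_t:
  assumes "continuous_on S (f :: 'a::topological_space \<Rightarrow> pt)"
  shows "continuous_on S (\<lambda>z. snd (snd (f z)) l)"
proof -
  have "continuous_on S (\<lambda>z. snd (snd (f z)))"
    by (intro continuous_intros assms)
  then show ?thesis
    by (rule continuous_on_compose2[OF continuous_on_product_coordinates]) auto
qed

lemma cont_cmb:
  assumes "continuous_on S c" "continuous_on S f" "continuous_on S g"
  shows "continuous_on S (\<lambda>z. cmb (c z) (f z) (g z))"
  unfolding cmb_def
  apply (intro continuous_intros continuous_on_coordinatewise_then_product assms
         cont_coord_a cont_coord_t)
  done

lemma cmb_0 [simp]: "cmb 0 x y = x" and cmb_1 [simp]: "cmb 1 x y = y"
  by (auto simp: cmb_def prod_eq_iff)

definition cconv :: "pt set \<Rightarrow> bool" where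
  "cconv S \<longleftrightarrow> (\<forall>x\<in>S. \<forall>y\<in>S. \<forall>t\<in>{0..1}. cmb t x y \<in> S)"

lemma seg_path_component:
  assumes "\<And>t. t \<in> {0..1} \<Longrightarrow> cmb t x y \<in> S"
  shows "path_component S x y"
  unfolding path_component_def
proof (intro exI conjI)
  show "path (\<lambda>t. cmb t x y)" unfolding path_def
    by (intro cont_cmb continuous_intros)
  show "path_image (\<lambda>t. cmb t x y) \<subseteq> S" using assms by (auto simp: path_image_def)
qed (auto simp: pathstart_def pathfinish_def)

lemma cconv_path_connected: "cconv S \<Longrightarrow> path_connected S"
  unfolding path_connected_component cconv_def
  by (auto intro: seg_path_component)

lemma cconv_simply_connected:
  assumes "cconv S" shows "simply_connected S"
  unfolding simply_connected_def homotopic_loops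
proof (intro allI impI)
  fix p q :: "real \<Rightarrow> pt"
  assume H: "path p \<and> pathfinish p = pathstart p \<and> path_image p \<subseteq> S \<and>
           path q \<and> pathfinish q = pathstart q \<and> path_image q \<subseteq> S"
  define h where "h = (\<lambda>z::real\<times>real. cmb (fst z) (p (snd z)) (q (snd z)))"
  have cs: "continuous_on ({0..1} \<times> {0..1}) (snd :: real\<times>real \<Rightarrow> real)"
    by (rule continuous_on_snd[OF continuous_on_id])
  have im: "snd ` ({0..1::real} \<times> {0..1::real}) \<subseteq> {0..1}" by auto
  have cp: "continuous_on ({0..1} \<times> {0..1}) (\<lambda>z::real\<times>real. p (snd z))"
    using H unfolding path_def using continuous_on_compose2[OF _ cs im] by blast
  have cq: "continuous_on ({0..1} \<times> {0..1}) (\<lambda>z::real\<times>real. q (snd z))"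
    using H unfolding path_def using continuous_on_compose2[OF _ cs im] by blast
  show "\<exists>h::real\<times>real\<Rightarrow>pt. continuous_on ({0..1} \<times> {0..1}) h \<and> h \<in> {0..1} \<times> {0..1} \<rightarrow> S \<and>
           (\<forall>x\<in>{0..1}. h (0, x) = p x) \<and> (\<forall>x\<in>{0..1}. h (1, x) = q x) \<and>
           (\<forall>t\<in>{0..1}. pathfinish (h \<circ> Pair t) = pathstart (h \<circ> Pair t))"
  proof (rule exI[where x=h], intro conjI)
    show "continuous_on ({0..1} \<times> {0..1}) h" unfolding h_def
      by (rule cont_cmb[OF continuous_on_fst[OF continuous_on_id] cp cq])
    show "h \<in> {0..1} \<times> {0..1} \<rightarrow> S"
    proof
      fix z :: "real \<times> real" assume z: "z \<in> {0..1} \<times> {0..1}"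
      have "p (snd z) \<in> S" "q (snd z) \<in> S" using H z by (auto simp: path_image_def)
      moreover have "fst z \<in> {0..1}" using z by auto
      ultimately show "h z \<in> S" using assms unfolding cconv_def h_def by blast
    qed
    show "\<forall>t\<in>{0..1}. pathfinish (h \<circ> Pair t) = pathstart (h \<circ> Pair t)"
      using H by (simp add: h_def pathfinish_def pathstart_def)
  qed (simp_all add: h_def)
qed

lemma tendsto_fun_iff:
  "((X :: 'a \<Rightarrow> 'b \<Rightarrow> 'c::topological_space) \<longlongrightarrow> f) F \<longleftrightarrow> (\<forall>i. ((\<lambda>n. X n i) \<longlongrightarrow> f i) F)"
proof
  assume L: "(X \<longlongrightarrow> f) F"
  show "\<forall>i. ((\<lambda>n. X n i) \<longlongrightarrow> f i) F"
  proof
    fix i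
    show "((\<lambda>n. X n i) \<longlongrightarrow> f i) F"
      using continuous_on_tendsto_compose[OF continuous_on_product_coordinates[of i] L] by simp
  qed
next
  assume R: "\<forall>i. ((\<lambda>n. X n i) \<longlongrightarrow> f i) F"
  show "(X \<longlongrightarrow> f) F"
  proof (rule topological_tendstoI)
    fix S :: "('b \<Rightarrow> 'c) set" assume "open S" "f \<in> S"
    then obtain U where U: "finite {i. U i \<noteq> UNIV}" "\<forall>i. open (U i)" "f \<in> Pi\<^sub>E UNIV U"
       "Pi\<^sub>E UNIV U \<subseteq> S"
      unfolding open_fun_def openin_product_topology_alt by auto
    have "\<forall>i\<in>{i. U i \<noteq> UNIV}. eventually (\<lambda>n. X n i \<in> U i) F"
      using R U(2,3) by (auto simp: PiE_iff intro!: topological_tendstoD)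
    then have "eventually (\<lambda>n. \<forall>i\<in>{i. U i \<noteq> UNIV}. X n i \<in> U i) F"
      by (rule eventually_ball_finite[OF U(1)])
    then show "eventually (\<lambda>n. X n \<in> S) F"
    proof (rule eventually_mono)
      fix n assume "\<forall>i\<in>{i. U i \<noteq> UNIV}. X n i \<in> U i"
      then have "X n \<in> Pi\<^sub>E UNIV U" by auto
      then show "X n \<in> S" using U(4) by blast
    qed
  qed
qed

lemma negC_iff: "z \<in> uminus ` Cset \<longleftrightarrow> Re z < 0 \<or> (Re z = 0 \<and> Im z < 0)"
proof
  assume "z \<in> uminus ` Cset" then show "Re z < 0 \<or> (Re z = 0 \<and> Im z < 0)"
    by (auto simp: Cset_def)
next
  assume "Re z < 0 \<or> (Re z = 0 \<and> Im z < 0)"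
  then have "-z \<in> Cset" by (auto simp: Cset_def)
  then show "z \<in> uminus ` Cset" by (metis image_eqI minus_minus)
qed

definition hfun :: "complex \<Rightarrow> complex" where
  "hfun z = (if z \<in> uminus ` Cset then z else 0)"

lemma hfun_tendsto:
  assumes A: "(A \<longlongrightarrow> z) F" and z: "z = 0 \<or> Re z \<noteq> 0"
  shows "((\<lambda>n. hfun (A n)) \<longlongrightarrow> hfun z) F"
proof -
  have ReA: "((\<lambda>n. Re (A n)) \<longlongrightarrow> Re z) F" using A by (rule tendsto_Re)
  consider "z = 0" | "Re z > 0" | "Re z < 0" using z by linarith
  then show ?thesis
  proof cases
    case 1
    have "((\<lambda>n. hfun (A n)) \<longlongrightarrow> 0) F"
    proof (rule Lim_null_comparison)
      show "\<forall>\<^sub>F n in F. norm (hfun (A n)) \<le> norm (A n)" by (auto simp: hfun_def)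
      show "((\<lambda>n. norm (A n)) \<longlongrightarrow> 0) F" using A 1 tendsto_norm_zero by blast
    qed
    then show ?thesis using 1 by (simp add: hfun_def)
  next
    case 2
    have "\<forall>\<^sub>F n in F. Re (A n) > 0" using order_tendstoD(1)[OF ReA 2] .
    then have "\<forall>\<^sub>F n in F. hfun (A n) = hfun z"
      by (rule eventually_mono) (use 2 in \<open>auto simp: hfun_def negC_iff\<close>)
    then show ?thesis by (rule tendsto_eventually)
  next
    case 3
    have "\<forall>\<^sub>F n in F. Re (A n) < 0" using order_tendstoD(2)[OF ReA 3] .
    then have "\<forall>\<^sub>F n in F. A n = hfun (A n)"
      by (rule eventually_mono) (auto simp: hfun_def negC_iff)
    moreover have "hfun z = z" using 3 by (auto simp: hfun_def negC_iff)
    ultimately show ?thesis using A Lim_transform_eventually by fastforce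
  qed
qed

lemma Trc_hfun:
  assumes "S \<subseteq> PN N"
  shows "Trc a (S \<inter> negC_idx N a) = (\<Sum>l\<in>S. hfun (a l))"
proof -
  have fin: "finite S" using assms finite_subset[of S "{1..N}"] by (auto simp: PN_def)
  have "S \<inter> negC_idx N a = {l\<in>S. a l \<in> uminus ` Cset}"
    using assms by (auto simp: negC_idx_def)
  then show ?thesis
    unfolding Trc_def hfun_def using sum.inter_filter[OF fin] by simp
qed

lemma negC_sub: "negC_idx N a \<subseteq> PN N" by (auto simp: negC_idx_def)

lemma piN_hfun: "piN N (w,a,\<theta>) = w - (\<Sum>l\<in>PN N. hfun (a l))"
proof -
  have "Trc a (negC_idx N a) = Trc a (PN N \<inter> negC_idx N a)"
    using negC_sub by (metis inf.absorb2)
  then show ?thesis unfolding piN_def using Trc_hfun[of "PN N" N a] by simp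
qed

lemma Trc_tendsto:
  assumes "S \<subseteq> PN N" and A: "\<And>l. ((\<lambda>n. A n l) \<longlongrightarrow> a l) F"
    and z: "\<And>l. a l = 0 \<or> Re (a l) \<noteq> 0"
  shows "((\<lambda>n. Trc (A n) (S \<inter> negC_idx N (A n))) \<longlongrightarrow> Trc a (S \<inter> negC_idx N a)) F"
  unfolding Trc_hfun[OF assms(1)]
  by (intro tendsto_sum hfun_tendsto A z)

lemma partI:
  assumes Lam: "\<Lambda> \<subseteq> PN N" and XD: "\<forall>n. X n \<in> DD N" and x: "x \<in> Dset N"
    and lim: "X \<longlonglongrightarrow> x"
  shows "(\<lambda>n. piL N \<Lambda> (X n)) \<longlonglongrightarrow> piL N \<Lambda> x"
proof -
  obtain w a \<theta> where xe: "x = (w,a,\<theta>)" by (cases x) auto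
  define W where "W n = fst (X n)" for n
  define A where "A n = fst (snd (X n))" for n
  define T where "T n = snd (snd (X n))" for n
  have Xe: "X n = (W n, A n, T n)" for n by (simp add: W_def A_def T_def)
  have Wl: "W \<longlonglongrightarrow> w" unfolding W_def using tendsto_fst[OF lim] xe by simp
  have Al0: "A \<longlonglongrightarrow> a" unfolding A_def using tendsto_fst[OF tendsto_snd[OF lim]] xe by simp
  have Tl0: "T \<longlonglongrightarrow> \<theta>" unfolding T_def using tendsto_snd[OF tendsto_snd[OF lim]] xe by simp
  have Al: "\<And>l. (\<lambda>n. A n l) \<longlonglongrightarrow> a l" using tendsto_fun_iff[THEN iffD1, OF Al0] by blast
  have Tl: "\<And>l. (\<lambda>n. T n l) \<longlonglongrightarrow> \<theta> l" using tendsto_fun_iff[THEN iffD1, OF Tl0] by blast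
  have z: "a l = 0 \<or> Re (a l) \<noteq> 0" for l
    using x xe by (cases "l \<in> PN N") (auto simp: Dset_def DD_def ambient_def)
  have pi: "(\<lambda>n. piN N (W n, A n, T n)) \<longlonglongrightarrow> piN N (w, a, \<theta>)"
    unfolding piN_hfun by (intro tendsto_intros Wl hfun_tendsto Al z)
  have tr: "(\<lambda>n. Trc (A n) (\<Lambda> \<inter> negC_idx N (A n))) \<longlonglongrightarrow> Trc a (\<Lambda> \<inter> negC_idx N a)"
    by (rule Trc_tendsto[OF Lam Al z])
  have f1: "(\<lambda>n. (\<lambda>j. if j \<in> PN (Nrem N \<Lambda>) then A n (phi N \<Lambda> j) else 0)) \<longlonglongrightarrow>
             (\<lambda>j. if j \<in> PN (Nrem N \<Lambda>) then a (phi N \<Lambda> j) else 0)"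
    unfolding tendsto_fun_iff by (auto intro: Al)
  have f2: "(\<lambda>n. (\<lambda>j. if j \<in> PN (Nrem N \<Lambda>) then T n (phi N \<Lambda> j) else 0)) \<longlonglongrightarrow>
             (\<lambda>j. if j \<in> PN (Nrem N \<Lambda>) then \<theta> (phi N \<Lambda> j) else 0)"
    unfolding tendsto_fun_iff by (auto intro: Tl)
  show ?thesis
    unfolding Xe xe piL_def
    using Wl Al0 Tl0 pi tr f1 f2
    by (auto intro!: tendsto_intros)
qed

definition O_set :: "nat \<Rightarrow> nat set \<Rightarrow> pt set" where
  "O_set N M = (\<Inter>l\<in>M. {x. Re (fst (snd x) l) < 0}) \<inter> (\<Inter>l\<in>PN N - M. {x. 0 < Re (fst (snd x) l)})
      \<inter> {x. 0 < Re (fst x) - (\<Sum>l\<in>M. Re (fst (snd x) l))}"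

definition E_set :: "nat \<Rightarrow> nat set \<Rightarrow> pt set" where
  "E_set N M = ambient N \<inter> O_set N M"

lemma finite_PN [simp]: "finite (PN N)" by (simp add: PN_def)
lemma card_PN [simp]: "card (PN N) = N" by (simp add: PN_def)

lemma cont_a_UNIV: "continuous_on UNIV (\<lambda>x::pt. Re (fst (snd x) l))"
  by (intro continuous_intros cont_coord_a[OF continuous_on_id, simplified])

lemma open_O_set: assumes "M \<subseteq> PN N" shows "open (O_set N M)"
proof -
  have fM: "finite M" using assms finite_subset finite_PN by blast
  have c1: "continuous_on UNIV (\<lambda>x::pt. Re (fst x) - (\<Sum>l\<in>M. Re (fst (snd x) l)))"
    by (intro continuous_intros cont_a_UNIV)
  show ?thesis unfolding O_set_def
    by (intro open_Int open_INT fM ballI finite_Diff finite_PN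
        open_Collect_less c1 cont_a_UNIV continuous_intros)
qed

lemma Re_hfun_le: "Re (hfun z) \<le> 0"
  by (auto simp: hfun_def negC_iff)

lemma Re_piN_ge: "Re w \<le> Re (piN N (w,a,\<theta>))"
proof -
  have "Re (\<Sum>l\<in>PN N. hfun (a l)) \<le> 0"
    unfolding Re_sum by (intro sum_nonpos Re_hfun_le)
  then show ?thesis unfolding piN_hfun by simp
qed

lemma Re_nz: assumes "(w,a,\<theta>) \<in> Dset N" "l \<in> PN N" "a l \<noteq> 0" shows "Re (a l) \<noteq> 0"
  using assms by (auto simp: Dset_def)

lemma E_char:
  assumes M: "M \<subseteq> PN N"
  shows "(w,a,\<theta>) \<in> E_set N M \<longleftrightarrow> (w,a,\<theta>) \<in> Dset N \<and> (\<forall>l\<in>PN N. a l \<noteq> 0) \<and> negC_idx N a = M"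
proof
  assume H: "(w,a,\<theta>) \<in> E_set N M"
  have amb: "(w,a,\<theta>) \<in> ambient N" using H by (simp add: E_set_def)
  have neg: "\<And>l. l \<in> M \<Longrightarrow> Re (a l) < 0" and pos: "\<And>l. l \<in> PN N - M \<Longrightarrow> Re (a l) > 0"
    and sm: "0 < Re w - (\<Sum>l\<in>M. Re (a l))"
    using H by (auto simp: E_set_def O_set_def)
  have nz: "\<forall>l\<in>PN N. Re (a l) \<noteq> 0" using neg pos M by (metis Diff_iff less_irrefl)
  have ng_l: "l \<in> negC_idx N a \<longleftrightarrow> l \<in> M" for l
  proof (cases "l \<in> M")
    case True
    then show ?thesis using neg[OF True] M by (auto simp: negC_idx_def negC_iff)
  next
    case False
    then show ?thesis using pos[of l] by (auto simp: negC_idx_def negC_iff)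
  qed
  have ng: "negC_idx N a = M" using ng_l by blast
  have "Trc a (negC_idx N a) = (\<Sum>l\<in>M. a l)" by (simp add: ng Trc_def)
  then have "Re (piN N (w,a,\<theta>)) = Re w - (\<Sum>l\<in>M. Re (a l))"
    by (simp add: piN_def Re_sum)
  then have "piN N (w,a,\<theta>) \<in> Cint" using sm by (simp add: Cint_def)
  then show "(w,a,\<theta>) \<in> Dset N \<and> (\<forall>l\<in>PN N. a l \<noteq> 0) \<and> negC_idx N a = M"
    using amb nz ng by (auto simp: Dset_def DD_def)
next
  assume H: "(w,a,\<theta>) \<in> Dset N \<and> (\<forall>l\<in>PN N. a l \<noteq> 0) \<and> negC_idx N a = M"
  have amb: "(w,a,\<theta>) \<in> ambient N" using H by (simp add: Dset_def DD_def)
  have nz: "\<And>l. l \<in> PN N \<Longrightarrow> Re (a l) \<noteq> 0" using H Re_nz by blast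
  have neg: "Re (a l) < 0" if l: "l \<in> M" for l
  proof -
    have "l \<in> PN N" "Re (a l) < 0 \<or> (Re (a l) = 0 \<and> Im (a l) < 0)"
      using H l by (auto simp: negC_idx_def negC_iff)
    then show ?thesis using nz[of l] by linarith
  qed
  have pos: "Re (a l) > 0" if l: "l \<in> PN N - M" for l
  proof -
    have "l \<in> PN N" "\<not> (Re (a l) < 0 \<or> (Re (a l) = 0 \<and> Im (a l) < 0))"
      using H l by (auto simp: negC_idx_def negC_iff)
    then show ?thesis using nz[of l] by linarith
  qed
  have "Trc a (negC_idx N a) = (\<Sum>l\<in>M. a l)" using H by (simp add: Trc_def)
  then have "Re (piN N (w,a,\<theta>)) = Re w - (\<Sum>l\<in>M. Re (a l))"
    by (simp add: piN_def Re_sum)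
  then have sm: "0 < Re w - (\<Sum>l\<in>M. Re (a l))" using H by (simp add: Dset_def Cint_def)
  show "(w,a,\<theta>) \<in> E_set N M"
    using amb neg pos sm by (simp add: E_set_def O_set_def)
qed

definition wit :: "nat \<Rightarrow> nat set \<Rightarrow> pt" where
  "wit N M = (1, \<lambda>l. if l \<in> PN N then (if l \<in> M then -1 else 1) else 0, \<lambda>l. 0)"

lemma wit_E: assumes "M \<subseteq> PN N" shows "wit N M \<in> E_set N M"
proof -
  have fM: "finite M" using assms finite_subset finite_PN by blast
  have "(\<Sum>l\<in>M. Re (if l \<in> PN N then (if l \<in> M then -1 else 1) else 0)) = (\<Sum>l\<in>M. (-1::real))"
    using assms by (intro sum.cong) auto
  then have "0 < 1 - (\<Sum>l\<in>M. Re (if l \<in> PN N then (if l \<in> M then -1 else 1) else (0::complex)))"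
    by simp
  then show ?thesis using assms
    by (auto simp: wit_def E_set_def O_set_def ambient_def)
qed

lemma conv_pos: "(p::real) > 0 \<Longrightarrow> q > 0 \<Longrightarrow> 0 \<le> t \<Longrightarrow> t \<le> 1 \<Longrightarrow> (1-t)*p + t*q > 0"
  by (cases "t = 1") (auto intro: add_pos_nonneg add_nonneg_pos mult_pos_pos)

lemma conv_neg: "(p::real) < 0 \<Longrightarrow> q < 0 \<Longrightarrow> 0 \<le> t \<Longrightarrow> t \<le> 1 \<Longrightarrow> (1-t)*p + t*q < 0"
  using conv_pos[of "-p" "-q" t] by (simp add: algebra_simps)

lemma cconv_E: "cconv (E_set N M)"
  unfolding cconv_def
proof (intro ballI)
  fix x y t assume x: "x \<in> E_set N M" and y: "y \<in> E_set N M" and t: "t \<in> {0..1::real}"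
  obtain w a \<theta> where xe: "x = (w,a,\<theta>)" by (cases x) auto
  obtain w' a' \<theta>' where ye: "y = (w',a',\<theta>')" by (cases y) auto
  have ce: "cmb t x y = ((1-t) *\<^sub>R w + t *\<^sub>R w', \<lambda>l. (1-t) *\<^sub>R a l + t *\<^sub>R a' l,
            \<lambda>l. (1-t) * \<theta> l + t * \<theta>' l)" by (simp add: cmb_def xe ye)
  have amb: "cmb t x y \<in> ambient N" using x y unfolding ce by (auto simp: xe ye E_set_def ambient_def)
  have neg: "Re ((1-t) *\<^sub>R a l + t *\<^sub>R a' l) < 0" if "l \<in> M" for l
    using x y that t conv_neg[of "Re (a l)" "Re (a' l)" t]
    by (auto simp: xe ye E_set_def O_set_def)
  have pos: "Re ((1-t) *\<^sub>R a l + t *\<^sub>R a' l) > 0" if "l \<in> PN N - M" for l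
    using x y that t conv_pos[of "Re (a l)" "Re (a' l)" t]
    by (auto simp: xe ye E_set_def O_set_def)
  have s1: "0 < Re w - (\<Sum>l\<in>M. Re (a l))" and s2: "0 < Re w' - (\<Sum>l\<in>M. Re (a' l))"
    using x y by (auto simp: xe ye E_set_def O_set_def)
  have "Re ((1-t) *\<^sub>R w + t *\<^sub>R w') - (\<Sum>l\<in>M. Re ((1-t) *\<^sub>R a l + t *\<^sub>R a' l))
        = (1-t) * (Re w - (\<Sum>l\<in>M. Re (a l))) + t * (Re w' - (\<Sum>l\<in>M. Re (a' l)))"
  proof -
    have "(\<Sum>l\<in>M. Re ((1-t) *\<^sub>R a l + t *\<^sub>R a' l)) = (1-t) * (\<Sum>l\<in>M. Re (a l)) + t * (\<Sum>l\<in>M. Re (a' l))"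
      by (simp add: sum.distrib sum_distrib_left)
    then show ?thesis by (simp add: algebra_simps)
  qed
  also have "\<dots> > 0" using conv_pos[OF s1 s2] t by auto
  finally show "cmb t x y \<in> E_set N M"
    using amb neg pos unfolding ce by (simp add: E_set_def O_set_def)
qed

lemma half_not_int: "(1/2::real) \<notin> \<int>"
proof
  assume "(1/2::real) \<in> \<int>"
  then obtain k :: int where "1/2 = (of_int k :: real)" by (auto elim: Ints_cases)
  then have "(1::real) = 2 * of_int k" by simp
  then have "(1::int) = 2 * k" by (metis of_int_1 of_int_eq_iff of_int_mult of_int_numeral)
  then show False by presburger
qed

lemma Dset_real_I:
  assumes "(w,a,\<theta>) \<in> ambient N" "Re w > 0" "\<And>l. l \<in> PN N \<Longrightarrow> Im (a l) = 0"
    "\<And>l. l \<in> PN N \<Longrightarrow> a l = 0 \<Longrightarrow> \<theta> l \<notin> \<int>"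
  shows "(w,a,\<theta>) \<in> Dset N"
proof -
  have "Re (piN N (w,a,\<theta>)) > 0" using Re_piN_ge[of w N a \<theta>] assms(2) by linarith
  moreover have "\<not> (Re (a l) = 0 \<and> a l \<noteq> 0)" if "l \<in> PN N" for l
    using assms(3)[OF that] complex_eq_iff by force
  ultimately show ?thesis using assms by (auto simp: Dset_def DD_def Cint_def)
qed

lemma E_sub_Dset: "M \<subseteq> PN N \<Longrightarrow> E_set N M \<subseteq> Dset N"
  using E_char by auto

lemma pc_base: assumes x: "x \<in> Dset N" shows "path_component (Dset N) x (wit N {})"
proof -
  obtain w a \<theta> where xe: "x = (w,a,\<theta>)" by (cases x) auto
  have amb: "(w,a,\<theta>) \<in> ambient N" and DDc: "\<And>l. l \<in> PN N \<Longrightarrow> a l = 0 \<Longrightarrow> \<theta> l \<notin> \<int>"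
    and pin: "Re (piN N (w,a,\<theta>)) > 0" and nim: "\<And>l. l \<in> PN N \<Longrightarrow> \<not> (Re (a l) = 0 \<and> a l \<noteq> 0)"
    using x by (auto simp: xe Dset_def DD_def Cint_def)
  define R where "R = \<bar>Re w\<bar> + 1"
  have R0: "R > 0" by (simp add: R_def)
  define W where "W = w + of_real R"
  have ReW: "Re W \<ge> 1" by (simp add: W_def R_def)
  define a' where "a' = (\<lambda>l. if l \<in> PN N \<and> a l = 0 then 1 else a l)"
  define M where "M = negC_idx N a"
  have MP: "M \<subseteq> PN N" by (simp add: M_def negC_sub)
  define sg where "sg = (\<lambda>l. if l \<in> PN N then (if l \<in> M then -1 else 1) else (0::complex))"
  define hf where "hf = (\<lambda>l. if l \<in> PN N then 1/2 else (0::real))"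
  define x1 where "x1 = (W, a, \<theta>)"
  define x2 where "x2 = (W, a', \<theta>)"
  define y where "y = (W, sg, hf)"
  define y' where "y' = (W, fst (snd (wit N {})), hf)"
  have p1: "path_component (Dset N) x x1"
  proof (rule seg_path_component)
    fix t :: real assume t: "t \<in> {0..1}"
    have ce: "cmb t x x1 = (w + of_real (t * R), a, \<theta>)"
      by (simp add: cmb_def xe x1_def W_def algebra_simps fun_eq_iff scaleR_conv_of_real)
    have "piN N (w + of_real (t * R), a, \<theta>) = piN N (w,a,\<theta>) + of_real (t*R)"
      by (simp add: piN_def)
    moreover have "0 \<le> t * R" using t R0 by simp
    ultimately have "Re (piN N (w + of_real (t * R), a, \<theta>)) > 0" using pin by simp
    then show "cmb t x x1 \<in> Dset N" unfolding ce
      using amb DDc nim by (auto simp: Dset_def DD_def Cint_def ambient_def)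
  qed
  have seg2: "cmb t x1 x2 \<in> Dset N" if t: "t \<in> {0..1}" for t
  proof -
    define aT where "aT = (\<lambda>l. if l \<in> PN N \<and> a l = 0 then of_real t else a l)"
    have ce: "cmb t x1 x2 = (W, aT, \<theta>)"
      by (auto simp: cmb_def x1_def x2_def a'_def aT_def fun_eq_iff algebra_simps scaleR_conv_of_real)
    have hh: "hfun (aT l) = hfun (a l)" for l
      using t by (auto simp: aT_def hfun_def negC_iff)
    have "piN N (W, aT, \<theta>) = piN N (w,a,\<theta>) + of_real R"
      by (simp add: piN_hfun hh W_def)
    then have "Re (piN N (W, aT, \<theta>)) > 0" using pin R0 by simp
    moreover have "(W, aT, \<theta>) \<in> ambient N" using amb by (auto simp: ambient_def aT_def)
    moreover have "\<theta> l \<notin> \<int>" if "l \<in> PN N" "aT l = 0" for l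
      using that DDc by (auto simp: aT_def split: if_splits)
    moreover have "\<not> (Re (aT l) = 0 \<and> aT l \<noteq> 0)" if "l \<in> PN N" for l
      using that nim[OF that] by (auto simp: aT_def complex_eq_iff)
    ultimately show ?thesis unfolding ce by (auto simp: Dset_def DD_def Cint_def)
  qed
  have p2: "path_component (Dset N) x1 x2" by (rule seg_path_component) (rule seg2)
  have x2D: "x2 \<in> Dset N" using seg2[of 1] by simp
  have nz2: "\<forall>l\<in>PN N. a' l \<noteq> 0" by (simp add: a'_def)
  have ng2: "negC_idx N a' = M"
    by (auto simp: negC_idx_def M_def a'_def negC_iff)
  have x2E: "x2 \<in> E_set N M" using E_char[OF MP] x2D nz2 ng2 by (simp add: x2_def)
  have yE: "y \<in> E_set N M"
  proof -
    have "(\<Sum>l\<in>M. Re (sg l)) = (\<Sum>l\<in>M. (-1::real))" using MP by (intro sum.cong) (auto simp: sg_def)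
    then have "0 < Re W - (\<Sum>l\<in>M. Re (sg l))" using ReW by simp
    then show ?thesis using MP
      by (auto simp: y_def sg_def hf_def E_set_def O_set_def ambient_def)
  qed
  have p3: "path_component (Dset N) x2 y"
    using cconv_E[of N M] x2E yE E_sub_Dset[OF MP]
    by (intro seg_path_component) (auto simp: cconv_def)
  have p4: "path_component (Dset N) y y'"
  proof (rule seg_path_component)
    fix t :: real assume t: "t \<in> {0..1}"
    define aT where "aT = (\<lambda>l. if l \<in> PN N then (if l \<in> M then of_real (2*t-1) else 1) else (0::complex))"
    have ce: "cmb t y y' = (W, aT, hf)"
      by (auto simp: cmb_def y_def y'_def wit_def sg_def aT_def fun_eq_iff algebra_simps
          scaleR_conv_of_real)
    have "(W, aT, hf) \<in> Dset N"
      by (rule Dset_real_I) (use ReW half_not_int in \<open>auto simp: ambient_def aT_def hf_def\<close>)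
    then show "cmb t y y' \<in> Dset N" using ce by simp
  qed
  have y'E: "y' \<in> E_set N {}"
    using ReW by (auto simp: y'_def wit_def hf_def E_set_def O_set_def ambient_def)
  have p5: "path_component (Dset N) y' (wit N {})"
    using cconv_E[of N "{}"] y'E wit_E[of "{}" N] E_sub_Dset[of "{}" N]
    by (intro seg_path_component) (auto simp: cconv_def)
  show ?thesis using p1 p2 p3 p4 p5 path_component_trans by metis
qed

lemma pc_Dset: "path_connected (Dset N)"
  unfolding path_connected_component
  by (meson pc_base path_component_sym path_component_trans)

lemma Tplus_sub: "Tplus N \<subseteq> Dset N"
proof
  fix x assume x: "x \<in> Tplus N"
  obtain w a \<theta> where xe: "x = (w,a,\<theta>)" by (cases x) auto
  have pos: "\<And>l. l \<in> PN N \<Longrightarrow> Re (a l) > 0" and w: "Re w > 0" and amb: "x \<in> ambient N"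
    using x by (auto simp: Tplus_def xe)
  have "negC_idx N a = {}" using pos by (force simp: negC_idx_def negC_iff)
  then have "piN N (w,a,\<theta>) = w" by (simp add: piN_def Trc_def)
  then show "x \<in> Dset N" using pos w amb
    by (force simp: xe Dset_def DD_def Cint_def)
qed

lemma Dint_sub_Dset: "Dint N \<subseteq> Dset N"
  unfolding Dint_def by (rule interior_of_subset)

lemma Dset_sub_amb: "Dset N \<subseteq> ambient N"
  by (auto simp: Dset_def DD_def)

lemma G_union:
  "{(w,a,\<theta>) \<in> Dset N. \<forall>l\<in>PN N. a l \<noteq> 0} = (\<Union>M\<in>Pow (PN N). E_set N M)"
proof (rule set_eqI)
  fix x :: pt
  obtain w a \<theta> where xe: "x = (w,a,\<theta>)" by (cases x) auto
  show "x \<in> {(w,a,\<theta>) \<in> Dset N. \<forall>l\<in>PN N. a l \<noteq> 0} \<longleftrightarrow> x \<in> (\<Union>M\<in>Pow (PN N). E_set N M)"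
  proof
    assume "x \<in> {(w,a,\<theta>) \<in> Dset N. \<forall>l\<in>PN N. a l \<noteq> 0}"
    then have "x \<in> E_set N (negC_idx N a)" using E_char[OF negC_sub[of N a], of w a \<theta>] by (simp add: xe)
    then show "x \<in> (\<Union>M\<in>Pow (PN N). E_set N M)" using negC_sub by blast
  next
    assume "x \<in> (\<Union>M\<in>Pow (PN N). E_set N M)"
    then obtain M where "M \<subseteq> PN N" "x \<in> E_set N M" by blast
    then show "x \<in> {(w,a,\<theta>) \<in> Dset N. \<forall>l\<in>PN N. a l \<noteq> 0}" using E_char[of M N w a \<theta>] by (simp add: xe)
  qed
qed

lemma inv_seq: "(\<lambda>k. \<i> * complex_of_real (inverse (real (Suc k)))) \<longlonglongrightarrow> 0"
proof -
  have "(\<lambda>k. complex_of_real (inverse (real (Suc k)))) \<longlonglongrightarrow> complex_of_real 0"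
    by (rule tendsto_of_real[OF LIMSEQ_inverse_real_of_nat])
  then have "(\<lambda>k. complex_of_real (inverse (real (Suc k)))) \<longlonglongrightarrow> 0"
    by (simp only: of_real_0)
  from tendsto_mult[OF tendsto_const[of \<i>] this]
  show ?thesis by (simp only: mult_zero_right)
qed

lemma Dint_eq: "Dint N = {(w,a,\<theta>) \<in> Dset N. \<forall>l\<in>PN N. a l \<noteq> 0}" (is "_ = ?G")
proof
  have "?G = (\<Union>M\<in>Pow (PN N). O_set N M) \<inter> ambient N"
    unfolding G_union E_set_def by blast
  moreover have "open (\<Union>M\<in>Pow (PN N). O_set N M)" using open_O_set by blast
  ultimately have "openin (subtopology euclidean (ambient N)) ?G"
    unfolding openin_subtopology by (metis open_openin)
  moreover have "?G \<subseteq> Dset N" by auto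
  ultimately show "?G \<subseteq> Dint N" unfolding Dint_def by (rule interior_of_maximal[rotated])
next
  show "Dint N \<subseteq> ?G"
  proof
    fix x assume xI: "x \<in> Dint N"
    obtain w a \<theta> where xe: "x = (w,a,\<theta>)" by (cases x) auto
    have xD: "x \<in> Dset N" using xI Dint_sub_Dset by blast
    have "openin (subtopology euclidean (ambient N)) (Dint N)" unfolding Dint_def by simp
    then obtain T where T: "open T" "Dint N = T \<inter> ambient N"
      unfolding openin_subtopology by (metis open_openin)
    have "a l \<noteq> 0" if l: "l \<in> PN N" for l
    proof
      assume a0: "a l = 0"
      define c where "c k = \<i> * complex_of_real (inverse (real (Suc k)))" for k
      define y where "y k = (w, a(l := c k), \<theta>)" for k
      have cl: "c \<longlonglongrightarrow> 0" unfolding c_def by (rule inv_seq)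
      have "(\<lambda>k. (a(l := c k)) i) \<longlonglongrightarrow> a i" for i
      proof (cases "i = l")
        case True
        then show ?thesis using cl a0 by simp
      qed simp
      then have "(\<lambda>k. (a(l := c k))) \<longlonglongrightarrow> a"
        unfolding tendsto_fun_iff by blast
      then have "y \<longlonglongrightarrow> x" unfolding y_def xe
        by (intro tendsto_Pair tendsto_const)
      moreover have "x \<in> T" using xI T by blast
      ultimately have "eventually (\<lambda>k. y k \<in> T) sequentially"
        using T(1) topological_tendstoD by blast
      then obtain k where k: "y k \<in> T" using eventually_sequentially by (metis order_refl)
      have "y k \<in> ambient N" using xD l unfolding y_def xe
        by (auto simp: Dset_def DD_def ambient_def)
      then have "y k \<in> Dset N" using k T Dint_sub_Dset by blast
      then have "\<not> (Re ((a(l := c k)) l) = 0 \<and> (a(l := c k)) l \<noteq> 0)"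
        using l unfolding y_def Dset_def by blast
      moreover have "Re (c k) = 0" by (simp add: c_def)
      moreover have "c k \<noteq> 0" unfolding c_def mult_eq_0_iff of_real_eq_0_iff by simp
      ultimately show False by simp
    qed
    then show "x \<in> ?G" using xD xe by auto
  qed
qed

lemma E_sub_Dint: "M \<subseteq> PN N \<Longrightarrow> E_set N M \<subseteq> Dint N"
  unfolding Dint_eq G_union by blast

lemma negC_E: "M \<subseteq> PN N \<Longrightarrow> x \<in> E_set N M \<Longrightarrow> negC_idx N (fst (snd x)) = M"
  using E_char[of M N "fst x" "fst (snd x)" "snd (snd x)"] by simp

lemma E_component: assumes M: "M \<subseteq> PN N" shows "E_set N M \<in> components (Dint N)"
  unfolding in_components_maximal
proof (intro conjI allI impI)
  show "E_set N M \<noteq> {}" using wit_E[OF M] by blast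
  show "E_set N M \<subseteq> Dint N" by (rule E_sub_Dint[OF M])
  show "connected (E_set N M)"
    by (rule path_connected_imp_connected[OF cconv_path_connected[OF cconv_E]])
  fix D assume H: "D \<noteq> {} \<and> E_set N M \<subseteq> D \<and> D \<subseteq> Dint N \<and> connected D"
  define U where "U = O_set N M"
  define V where "V = (\<Union>M'\<in>Pow (PN N) - {M}. O_set N M')"
  have oU: "open U" unfolding U_def using open_O_set[OF M] .
  have oV: "open V" unfolding V_def using open_O_set by blast
  have Damb: "D \<subseteq> ambient N" using H Dint_sub_Dset Dset_sub_amb by blast
  have "D \<subseteq> U \<union> V"
  proof
    fix y assume "y \<in> D"
    then have "y \<in> (\<Union>M\<in>Pow (PN N). E_set N M)" using H unfolding Dint_eq G_union by blast
    then obtain M' where "M' \<subseteq> PN N" "y \<in> O_set N M'" unfolding E_set_def by blast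
    then show "y \<in> U \<union> V" unfolding U_def V_def by (cases "M' = M") auto
  qed
  moreover have "U \<inter> V \<inter> D = {}"
  proof (rule ccontr)
    assume "U \<inter> V \<inter> D \<noteq> {}"
    then obtain y M' where y: "y \<in> D" "y \<in> O_set N M" "M' \<subseteq> PN N" "M' \<noteq> M" "y \<in> O_set N M'"
      unfolding U_def V_def by blast
    have "y \<in> E_set N M" "y \<in> E_set N M'" using y Damb by (auto simp: E_set_def)
    then show False using negC_E[OF M] negC_E[OF y(3)] y(4) by metis
  qed
  ultimately have "U \<inter> D = {} \<or> V \<inter> D = {}" using connectedD H oU oV by blast
  moreover have "U \<inter> D \<noteq> {}" using H wit_E[OF M] unfolding U_def E_set_def by blast
  ultimately have "D \<subseteq> U" using \<open>D \<subseteq> U \<union> V\<close> by blast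
  then have "D \<subseteq> E_set N M" using Damb unfolding U_def E_set_def by blast
  then show "D = E_set N M" using H by blast
qed

lemma comps: "components (Dint N) = E_set N ` Pow (PN N)"
proof
  show "E_set N ` Pow (PN N) \<subseteq> components (Dint N)" using E_component by blast
  show "components (Dint N) \<subseteq> E_set N ` Pow (PN N)"
  proof
    fix C assume C: "C \<in> components (Dint N)"
    then obtain x where x: "x \<in> Dint N" "C = connected_component_set (Dint N) x" by (rule componentsE)
    then obtain M where M: "M \<subseteq> PN N" "x \<in> E_set N M" unfolding Dint_eq G_union by blast
    have "x \<in> C" using x connected_component_refl by (simp add: mem_Collect_eq)
    then have "C \<inter> E_set N M \<noteq> {}" using M by blast
    then have "C = E_set N M" using components_eq[OF C E_component[OF M(1)]] by blast
    then show "C \<in> E_set N ` Pow (PN N)" using M by blast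
  qed
qed

lemma DintL_E: assumes M: "M \<subseteq> PN N" shows "DintL N M = E_set N M"
proof (rule set_eqI)
  fix x :: pt
  obtain w a \<theta> where xe: "x = (w,a,\<theta>)" by (cases x) auto
  show "x \<in> DintL N M \<longleftrightarrow> x \<in> E_set N M"
    unfolding xe DintL_def Dint_eq using E_char[OF M, of w a \<theta>] by auto
qed

theorem lemma5:
  fixes N :: nat and \<Lambda> :: "nat set"
  assumes "\<Lambda> \<subseteq> PN N"
  shows "(\<forall>(X :: nat \<Rightarrow> pt) x. (\<forall>n. X n \<in> DD N) \<longrightarrow> x \<in> Dset N \<longrightarrow> X \<longlonglongrightarrow> x \<longrightarrow>
            (\<lambda>n. piL N \<Lambda> (X n)) \<longlonglongrightarrow> piL N \<Lambda> x)
       \<and> path_connected (Dset N)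
       \<and> Tplus N \<subseteq> Dset N
       \<and> (N \<ge> 1 \<longrightarrow>
            Dint N = {(w,a,\<theta>) \<in> Dset N. \<forall>l \<in> PN N. a l \<noteq> 0}
          \<and> components (Dint N) = DintL N ` Pow (PN N)
          \<and> inj_on (DintL N) (Pow (PN N))
          \<and> card (components (Dint N)) = 2 ^ N
          \<and> (\<forall>M \<in> Pow (PN N). simply_connected (DintL N M)))"
proof -
  have im: "DintL N ` Pow (PN N) = E_set N ` Pow (PN N)"
    using DintL_E by (intro image_cong) auto
  have inj: "inj_on (DintL N) (Pow (PN N))"
  proof (rule inj_onI)
    fix M M' assume M: "M \<in> Pow (PN N)" and M': "M' \<in> Pow (PN N)" and eq: "DintL N M = DintL N M'"
    have "E_set N M = E_set N M'" using eq DintL_E M M' by auto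
    then have "wit N M \<in> E_set N M'" using wit_E M by blast
    then show "M = M'" using negC_E M M' wit_E by (metis PowD)
  qed
  have cd: "card (components (Dint N)) = 2 ^ N"
  proof -
    have "card (components (Dint N)) = card (DintL N ` Pow (PN N))" using comps im by simp
    also have "\<dots> = card (Pow (PN N))" using card_image[OF inj] .
    also have "\<dots> = 2 ^ N" by (simp add: card_Pow)
    finally show ?thesis .
  qed
  have sc: "\<forall>M \<in> Pow (PN N). simply_connected (DintL N M)"
    using DintL_E cconv_simply_connected[OF cconv_E] by auto
  show ?thesis
    using partI[OF assms] pc_Dset Tplus_sub Dint_eq comps im inj cd sc by auto
qed

end
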